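(* Suppose $\mathcal{C}$ is an $[n,k]_q$ MWS code satisfying property (B). Then there exists $r=(r_1,\dots,r_{q-1})\in\mathbb{N}^{q-1}$, $r\neq 0$, such that, with $R=r_1+\dots+r_{q-1}$, the generalized $r$-repetition code $\mathcal{C}(r)$ is an $[Rn,k]_q$ MWS code satisfying properties (A) and (B).
   Context: Fix a primitive element $\alpha$ of $\mathbb{F}_q$; $\mathbb{N}=\{0,1,2,\dots\}$. An $[n,k]_q$ code is a $k$-dimensional subspace of $\mathbb{F}_q^n$ (non-degenerate if $k\ge2$); it is MWS if it has exactly $\frac{q^k-1}{q-1}$ distinct non-zero Hamming weights. For $c\in\mathbb{F}_q^n$, $\beta\in\mathbb{F}_q$, $c[\beta]=|\{l:c_l=\beta\}|$ and $V(c)=(c[\alpha],\dots,c[\alpha^{q-1}],c[0])$. For $r\in\mathbb{N}^{q-1}$, the generalized $r$-repetition code is $\mathcal{C}(r)=\{c^r: c\in\mathcal{C}\}$, where $c^r$ is the concatenation of $r_1$ copies of $\alpha c$, then $r_2$ copies of $\alpha^2 c$, ..., then $r_{q-1}$ copies of $\alpha^{q-1}c$ (a vector of length $Rn$). Property (A) for a code $\mathcal{D}$: there exists $\beta\in\mathbb{F}_q^*$ such that for $a,b\in\mathcal{D}$, $a[\beta]=b[\beta]$ only if $a=b$. Property (B) for a code $\mathcal{D}$: for every $c\in\mathcal{D}\setminus\{0\}$ the entries of $V(c)$ are pairwise distinct. *)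

theory Defs
  imports Main "HOL.Vector_Spaces" "HOL-Library.Function_Algebras"
begin

text \<open>Vectors of F_q^n are represented as functions nat => 'a that vanish at every
  index >= n; F_q is a finite field type 'a, q = card (UNIV :: 'a set).\<close>

definition fscale :: "'a::field \<Rightarrow> (nat \<Rightarrow> 'a) \<Rightarrow> (nat \<Rightarrow> 'a)" where
  "fscale c v = (\<lambda>i. c * v i)"

interpretation fvs: vector_space fscale
  by unfold_locales (auto simp: fscale_def fun_eq_iff algebra_simps)

definition vecs :: "nat \<Rightarrow> (nat \<Rightarrow> 'a::zero) set" where
  "vecs n = {v. \<forall>i\<ge>n. v i = 0}"

definition primitive :: "'a::{finite,field} \<Rightarrow> bool" where
  "primitive \<alpha> \<longleftrightarrow> (\<forall>x. x \<noteq> 0 \<longrightarrow> (\<exists>i::nat. x = \<alpha> ^ i))"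

definition is_code :: "nat \<Rightarrow> nat \<Rightarrow> (nat \<Rightarrow> 'a::{finite,field}) set \<Rightarrow> bool" where
  "is_code n k C \<longleftrightarrow> C \<subseteq> vecs n \<and> fvs.subspace C \<and> fvs.dim C = k \<and>
     (k \<ge> 2 \<longrightarrow> (\<forall>i<n. \<exists>c\<in>C. c i \<noteq> 0))"

definition hwt :: "nat \<Rightarrow> (nat \<Rightarrow> 'a::zero) \<Rightarrow> nat" where
  "hwt n c = card {l. l < n \<and> c l \<noteq> 0}"

definition is_MWS :: "nat \<Rightarrow> nat \<Rightarrow> (nat \<Rightarrow> 'a::{finite,field}) set \<Rightarrow> bool" where
  "is_MWS n k C \<longleftrightarrow> is_code n k C \<and>
     card (hwt n ` (C - {0})) = (card (UNIV :: 'a set) ^ k - 1) div (card (UNIV :: 'a set) - 1)"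

definition cnt :: "nat \<Rightarrow> (nat \<Rightarrow> 'a) \<Rightarrow> 'a \<Rightarrow> nat" where
  "cnt n c \<beta> = card {l. l < n \<and> c l = \<beta>}"

definition Vvec :: "'a::{finite,field} \<Rightarrow> nat \<Rightarrow> (nat \<Rightarrow> 'a) \<Rightarrow> nat list" where
  "Vvec \<alpha> n c = map (\<lambda>j. cnt n c (\<alpha> ^ j)) [1..<card (UNIV :: 'a set)] @ [cnt n c 0]"

definition propA :: "nat \<Rightarrow> (nat \<Rightarrow> 'a::{finite,field}) set \<Rightarrow> bool" where
  "propA n D \<longleftrightarrow> (\<exists>\<beta>. \<beta> \<noteq> 0 \<and> (\<forall>a\<in>D. \<forall>b\<in>D. cnt n a \<beta> = cnt n b \<beta> \<longrightarrow> a = b))"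

definition propB :: "'a::{finite,field} \<Rightarrow> nat \<Rightarrow> (nat \<Rightarrow> 'a) set \<Rightarrow> bool" where
  "propB \<alpha> n D \<longleftrightarrow> (\<forall>c\<in>D - {0}. distinct (Vvec \<alpha> n c))"

definition to_list :: "nat \<Rightarrow> (nat \<Rightarrow> 'a) \<Rightarrow> 'a list" where
  "to_list n v = map v [0..<n]"

definition of_list :: "'a::zero list \<Rightarrow> (nat \<Rightarrow> 'a)" where
  "of_list xs = (\<lambda>i. if i < length xs then xs ! i else 0)"

text \<open>c^r: r_1 copies of alpha c, then r_2 copies of alpha^2 c, ..., r_(q-1) copies of
  alpha^(q-1) c; r is given by its values r 1, ..., r (q-1).\<close>
definition rep_vec :: "'a::{finite,field} \<Rightarrow> (nat \<Rightarrow> nat) \<Rightarrow> nat \<Rightarrow> (nat \<Rightarrow> 'a) \<Rightarrow> (nat \<Rightarrow> 'a)" where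
  "rep_vec \<alpha> r n c = of_list (concat (map (\<lambda>j. concat (replicate (r j)
       (to_list n (fscale (\<alpha> ^ j) c)))) [1..<card (UNIV :: 'a set)]))"

definition rep_code :: "'a::{finite,field} \<Rightarrow> (nat \<Rightarrow> nat) \<Rightarrow> nat \<Rightarrow> (nat \<Rightarrow> 'a) set \<Rightarrow> (nat \<Rightarrow> 'a) set" where
  "rep_code \<alpha> r n C = rep_vec \<alpha> r n ` C"

end

theory Submission
  imports Defs "HOL-Library.FuncSet"
begin

lemma card_ge2: "card (UNIV :: 'a::{finite,field} set) \<ge> 2"
proof -
  have "{0::'a, 1} \<subseteq> UNIV" by simp
  hence "card {0::'a,1} \<le> card (UNIV::'a set)" by (intro card_mono) auto
  thus ?thesis by simp
qed

lemma pow_m_1: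
  fixes \<alpha> :: "'a::{finite,field}"
  assumes "\<alpha> \<noteq> 0"
  shows "\<alpha> ^ (card (UNIV::'a set) - 1) = 1"
proof -
  let ?U = "UNIV - {0::'a}"
  have cU: "card ?U = card (UNIV::'a set) - 1" by (simp add: card_Diff_singleton)
  have inj: "inj_on (\<lambda>x. \<alpha> * x) ?U" using assms by (auto simp: inj_on_def)
  have img: "(\<lambda>x. \<alpha> * x) ` ?U = ?U"
  proof
    show "(\<lambda>x. \<alpha> * x) ` ?U \<subseteq> ?U" using assms by auto
    show "?U \<subseteq> (\<lambda>x. \<alpha> * x) ` ?U"
    proof
      fix y assume "y \<in> ?U"
      hence "y = \<alpha> * (y / \<alpha>)" "y / \<alpha> \<in> ?U" using assms by auto
      thus "y \<in> (\<lambda>x. \<alpha> * x) ` ?U" by blast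
    qed
  qed
  have "prod id ?U = prod id ((\<lambda>x. \<alpha> * x) ` ?U)" using img by simp
  also have "\<dots> = prod (\<lambda>x. \<alpha> * x) ?U" using prod.reindex[OF inj, of id] by simp
  also have "\<dots> = \<alpha> ^ card ?U * prod id ?U" by (simp add: prod.distrib)
  finally have "1 * prod id ?U = \<alpha> ^ card ?U * prod id ?U" by simp
  moreover have "prod id ?U \<noteq> 0" by (simp add: prod_zero_iff)
  ultimately have "\<alpha> ^ card ?U = 1" by (metis mult_right_cancel)
  thus ?thesis using cU by simp
qed

lemma enum_ex:
  fixes \<alpha> :: "'a::{finite,field}"
  assumes "primitive \<alpha>" "\<alpha> \<noteq> 0" "x \<noteq> 0"
  shows "\<exists>j\<in>{1..<card (UNIV::'a set)}. x = \<alpha> ^ j"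
proof -
  let ?m = "card (UNIV::'a set) - 1"
  have m1: "?m \<ge> 1" using card_ge2[where 'a='a] by simp
  obtain i where i: "x = \<alpha> ^ i" using assms unfolding primitive_def by blast
  have am: "\<alpha> ^ ?m = 1" using pow_m_1 assms(2) by blast
  have "\<alpha> ^ i = (\<alpha> ^ ?m) ^ (i div ?m) * \<alpha> ^ (i mod ?m)"
  proof -
    have "i = ?m * (i div ?m) + i mod ?m" by simp
    hence "\<alpha> ^ i = \<alpha> ^ (?m * (i div ?m)) * \<alpha> ^ (i mod ?m)" by (metis power_add)
    thus ?thesis by (simp add: power_mult)
  qed
  hence x: "x = \<alpha> ^ (i mod ?m)" using am i by simp
  show ?thesis
  proof (cases "i mod ?m = 0")
    case True
    hence "x = \<alpha> ^ ?m" using x am by simp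
    thus ?thesis using m1 by (intro bexI[of _ ?m]) auto
  next
    case False
    have "i mod ?m < ?m" using m1 by simp
    hence "i mod ?m \<in> {1..<card (UNIV::'a set)}" using False by simp
    thus ?thesis using x by blast
  qed
qed

lemma enum_inj:
  fixes \<alpha> :: "'a::{finite,field}"
  assumes "primitive \<alpha>" "\<alpha> \<noteq> 0"
  shows "inj_on (\<lambda>j. \<alpha> ^ j) {1..<card (UNIV::'a set)}"
proof -
  have "(\<lambda>j. \<alpha> ^ j) ` {1..<card (UNIV::'a set)} = UNIV - {0}"
    using enum_ex[OF assms] assms(2) by auto
  hence "card ((\<lambda>j. \<alpha> ^ j) ` {1..<card (UNIV::'a set)}) = card {1..<card (UNIV::'a set)}"
    by (simp add: card_Diff_singleton)
  thus ?thesis by (intro eq_card_imp_inj_on) auto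
qed


definition shape :: "'a::{finite,field} \<Rightarrow> (nat \<Rightarrow> nat) \<Rightarrow> nat \<Rightarrow> ('a \<times> nat) list" where
  "shape \<alpha> r n = concat (map (\<lambda>j. concat (replicate (r j) (map (\<lambda>t. (\<alpha> ^ j, t)) [0..<n])))
      [1..<card (UNIV::'a set)])"

lemma rep_list:
  fixes \<alpha> :: "'a::{finite,field}"
  shows "concat (map (\<lambda>j. concat (replicate (r j) (to_list n (fscale (\<alpha> ^ j) c)))) [1..<card (UNIV::'a::{finite,field} set)])
   = map (\<lambda>p. fst p * c (snd p)) (shape \<alpha> r n)"
  by (simp add: shape_def to_list_def fscale_def map_concat o_def)

lemma rep_vec_eq:
  fixes \<alpha> :: "'a::{finite,field}"
  shows "rep_vec \<alpha> r n c = (\<lambda>i. if i < length (shape \<alpha> r n)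
      then fst (shape \<alpha> r n ! i) * c (snd (shape \<alpha> r n ! i)) else 0)"
  unfolding rep_vec_def rep_list by (auto simp: of_list_def fun_eq_iff)

lemma length_cr: "length (concat (replicate k xs)) = k * length xs"
  by (induction k) auto

lemma filter_cr: "length (filter P (concat (replicate k xs))) = k * length (filter P xs)"
  by (induction k) auto

lemma sum_list_sum_upt: "(\<Sum>j\<leftarrow>[a..<b]. f j) = (\<Sum>j\<in>{a..<b}. (f j :: nat))"
  by (simp add: sum_list_distinct_conv_sum_set)

lemma length_shape: "length (shape \<alpha> r n) = (\<Sum>j\<in>{1..<card (UNIV::'a set)}. r j) * n"
  for \<alpha> :: "'a::{finite,field}"
  by (simp add: shape_def length_concat o_def length_cr sum_list_sum_upt sum_list_replicate sum_distrib_right)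

lemma length_rep_list:
  fixes \<alpha> :: "'a::{finite,field}"
  shows "length (concat (map (\<lambda>j. concat (replicate (r j) (to_list n (fscale (\<alpha> ^ j) c)))) [1..<card (UNIV::'a::{finite,field} set)]))
   = (\<Sum>j\<in>{1..<card (UNIV::'a set)}. r j) * n"
  unfolding rep_list by (simp add: length_shape)

lemma card_of_list: "card {l. l < length xs \<and> P (of_list xs l)} = length (filter P xs)"
proof -
  have "{l. l < length xs \<and> P (of_list xs l)} = {i. i < length xs \<and> P (xs ! i)}"
    by (auto simp: of_list_def)
  thus ?thesis by (simp add: length_filter_conv_card)
qed

lemma card_rep:
  fixes \<alpha> :: "'a::{finite,field}"
  shows "card {l. l < (\<Sum>j\<in>{1..<card (UNIV::'a set)}. r j) * n \<and> P (rep_vec \<alpha> r n c l)}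
    = (\<Sum>j\<in>{1..<card (UNIV::'a set)}. r j * card {l. l < n \<and> P (fscale (\<alpha> ^ j) c l)})"
proof -
  let ?L = "concat (map (\<lambda>j. concat (replicate (r j) (to_list n (fscale (\<alpha> ^ j) c)))) [1..<card (UNIV::'a set)])"
  have "card {l. l < (\<Sum>j\<in>{1..<card (UNIV::'a set)}. r j) * n \<and> P (rep_vec \<alpha> r n c l)}
      = card {l. l < length ?L \<and> P (of_list ?L l)}"
    unfolding length_rep_list rep_vec_def ..
  also have "\<dots> = length (filter P ?L)" by (rule card_of_list)
  also have "\<dots> = (\<Sum>j\<in>{1..<card (UNIV::'a set)}. r j * length (filter P (to_list n (fscale (\<alpha> ^ j) c))))"
    by (simp add: filter_concat length_concat o_def filter_cr sum_list_sum_upt sum_list_replicate)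
  also have "\<dots> = (\<Sum>j\<in>{1..<card (UNIV::'a set)}. r j * card {l. l < n \<and> P (fscale (\<alpha> ^ j) c l)})"
  proof (rule sum.cong[OF refl])
    fix j
    have "{i. i < n \<and> P (map (fscale (\<alpha> ^ j) c) [0..<n] ! i)} = {l. l < n \<and> P (fscale (\<alpha> ^ j) c l)}"
      by auto
    thus "r j * length (filter P (to_list n (fscale (\<alpha> ^ j) c))) = r j * card {l. l < n \<and> P (fscale (\<alpha> ^ j) c l)}"
      by (simp add: to_list_def length_filter_conv_card)
  qed
  finally show ?thesis .
qed

lemma cnt_scale:
  fixes a :: "'a::field"
  assumes "a \<noteq> 0" shows "cnt n (fscale a c) \<gamma> = cnt n c (\<gamma> / a)"
proof -
  have "\<And>l. (a * c l = \<gamma>) = (c l = \<gamma> / a)" using assms by (auto simp: field_simps)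
  thus ?thesis by (simp add: cnt_def fscale_def)
qed

lemma hwt_scale:
  fixes a :: "'a::field"
  assumes "a \<noteq> 0" shows "hwt n (fscale a c) = hwt n c"
  using assms by (simp add: hwt_def fscale_def)

lemma cnt_rep:
  fixes \<alpha> :: "'a::{finite,field}"
  assumes "\<alpha> \<noteq> 0"
  shows "cnt ((\<Sum>j\<in>{1..<card (UNIV::'a set)}. r j) * n) (rep_vec \<alpha> r n c) \<gamma>
    = (\<Sum>j\<in>{1..<card (UNIV::'a set)}. r j * cnt n c (\<gamma> / \<alpha> ^ j))"
  using card_rep[of r n "\<lambda>x. x = \<gamma>" \<alpha> c] assms
  by (simp add: cnt_def[symmetric] cnt_scale)

lemma hwt_rep:
  fixes \<alpha> :: "'a::{finite,field}"
  assumes "\<alpha> \<noteq> 0"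
  shows "hwt ((\<Sum>j\<in>{1..<card (UNIV::'a set)}. r j) * n) (rep_vec \<alpha> r n c)
    = (\<Sum>j\<in>{1..<card (UNIV::'a set)}. r j) * hwt n c"
  using card_rep[of r n "\<lambda>x. x \<noteq> 0" \<alpha> c] assms
  by (simp add: hwt_def[symmetric] hwt_scale sum_distrib_right)


lemma finite_vecs: "finite (vecs n :: (nat \<Rightarrow> 'a::{finite,zero}) set)"
proof -
  have "vecs n \<subseteq> (\<lambda>g i. if i < n then g i else 0) ` ({..<n} \<rightarrow>\<^sub>E (UNIV :: 'a set))"
  proof
    fix v :: "nat \<Rightarrow> 'a" assume "v \<in> vecs n"
    hence "v = (\<lambda>i. if i < n then restrict v {..<n} i else 0)"
      by (auto simp: vecs_def fun_eq_iff)
    moreover have "restrict v {..<n} \<in> {..<n} \<rightarrow>\<^sub>E (UNIV :: 'a set)" by simp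
    ultimately show "v \<in> (\<lambda>g i. if i < n then g i else 0) ` ({..<n} \<rightarrow>\<^sub>E (UNIV :: 'a set))"
      by blast
  qed
  moreover have "finite ({..<n} \<rightarrow>\<^sub>E (UNIV :: 'a set))" by (simp add: finite_PiE)
  ultimately show ?thesis by (meson finite_imageI finite_subset)
qed

lemma card_code:
  fixes C :: "(nat \<Rightarrow> 'a::{finite,field}) set"
  assumes "is_code n k C"
  shows "finite C \<and> card C = card (UNIV::'a set) ^ k"
proof -
  have Cv: "C \<subseteq> vecs n" and sub: "fvs.subspace C" and dC: "fvs.dim C = k"
    using assms by (auto simp: is_code_def)
  have fC: "finite C" using Cv finite_vecs finite_subset by blast
  obtain B where B: "B \<subseteq> C" "fvs.independent B" "C \<subseteq> fvs.span B" "card B = fvs.dim C"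
    using fvs.basis_exists by blast
  have fB: "finite B" using B(1) fC finite_subset by blast
  have spB: "fvs.span B = C" using fvs.span_subspace[OF B(1) B(3) sub] .
  define F where "F u = (\<Sum>v\<in>B. fscale (u v) v)" for u :: "(nat \<Rightarrow> 'a) \<Rightarrow> 'a"
  have rng: "C = range F" using spB fvs.span_finite[OF fB] by (simp add: F_def)
  have Fr: "F u = F (restrict u B)" for u unfolding F_def by (rule sum.cong) auto
  have img: "C = F ` (B \<rightarrow>\<^sub>E UNIV)"
  proof
    show "C \<subseteq> F ` (B \<rightarrow>\<^sub>E UNIV)"
    proof
      fix x assume "x \<in> C"
      then obtain u where "x = F u" using rng by blast
      hence "x = F (restrict u B)" using Fr[of u] by (rule trans)
      moreover have "restrict u B \<in> B \<rightarrow>\<^sub>E UNIV" by simp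
      ultimately show "x \<in> F ` (B \<rightarrow>\<^sub>E UNIV)" by (rule image_eqI)
    qed
    show "F ` (B \<rightarrow>\<^sub>E UNIV) \<subseteq> C" using rng by (simp add: image_subsetI)
  qed
  have inj: "inj_on F (B \<rightarrow>\<^sub>E UNIV)"
  proof (rule inj_onI)
    fix u u' assume u: "u \<in> B \<rightarrow>\<^sub>E UNIV" and u': "u' \<in> B \<rightarrow>\<^sub>E UNIV" and eq: "F u = F u'"
    have "(\<Sum>v\<in>B. fscale (u v - u' v) v) = F u - F u'"
      by (simp add: F_def fvs.scale_left_diff_distrib sum_subtractf)
    hence z: "(\<Sum>v\<in>B. fscale (u v - u' v) v) = 0" using eq by simp
    have "\<forall>v\<in>B. u v - u' v = 0"
      using fvs.independentD[OF B(2) fB subset_refl z] by blast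
    thus "u = u'" using u u' by (auto simp: fun_eq_iff PiE_def extensional_def)
  qed
  have "card C = card (B \<rightarrow>\<^sub>E (UNIV::'a set))" using img card_image[OF inj] by simp
  also have "\<dots> = card (UNIV::'a set) ^ card B" by (simp add: card_PiE fB)
  finally show ?thesis using fC B(4) dC by simp
qed

lemma dvd_pow_minus1: "(q - 1) dvd (q ^ k - (1::nat))"
proof (cases "q = 0")
  case True thus ?thesis by (cases k) auto
next
  case False
  show ?thesis
  proof (induction k)
    case 0 thus ?case by simp
  next
    case (Suc k)
    have "q ^ Suc k - 1 = q * (q ^ k - 1) + (q - 1)"
      using False by (simp add: algebra_simps diff_mult_distrib2)
    thus ?case using Suc.IH by simp
  qed
qed


lemma nz_fun: "(x :: nat \<Rightarrow> 'a::zero) \<noteq> 0 \<Longrightarrow> \<exists>i. x i \<noteq> 0"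
  by (rule ccontr) (auto simp: fun_eq_iff)

lemma fscale_comp: "fscale a (fscale b x) = fscale (a * b) x"
  by (simp add: fscale_def fun_eq_iff mult.assoc)

lemma fscale_one: "fscale 1 x = x"
  by (simp add: fscale_def)

lemma fscale_nz: "(a::'a::field) \<noteq> 0 \<Longrightarrow> x \<noteq> 0 \<Longrightarrow> fscale a x \<noteq> 0"
  by (auto simp: fscale_def fun_eq_iff)

lemma class_lemma:
  fixes C :: "(nat \<Rightarrow> 'a::{finite,field}) set"
  assumes mws: "is_MWS n k C" and c: "c \<in> C" "c \<noteq> 0" and d: "d \<in> C" "d \<noteq> 0"
    and w: "hwt n c = hwt n d"
  shows "\<exists>s. s \<noteq> 0 \<and> d = fscale s c"
proof (rule ccontr)
  assume nex: "\<not> (\<exists>s. s \<noteq> 0 \<and> d = fscale s c)"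
  let ?q = "card (UNIV::'a set)"
  let ?U = "UNIV - {0::'a}"
  define m where "m = ?q - 1"
  have m1: "m \<ge> 1" using card_ge2[where 'a='a] by (simp add: m_def)
  have cU: "card ?U = m" by (simp add: card_Diff_singleton m_def)
  have code: "is_code n k C" using mws by (simp add: is_MWS_def)
  have sub: "fvs.subspace C" using code by (simp add: is_code_def)
  have fc: "finite C" and cC: "card C = ?q ^ k" using card_code[OF code] by auto
  have z: "0 \<in> C" using fvs.subspace_0[OF sub] .
  define cls where "cls x = (\<lambda>a. fscale a x) ` ?U" for x
  have card_cls: "card (cls x) = m" if xnz: "x \<noteq> 0" for x
  proof -
    obtain i where i: "x i \<noteq> 0" using nz_fun[OF xnz] by blast
    have "inj_on (\<lambda>a. fscale a x) ?U"
    proof (rule inj_onI)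
      fix a b assume "fscale a x = fscale b x"
      hence "a * x i = b * x i" unfolding fscale_def by (rule fun_cong)
      thus "a = b" using i by simp
    qed
    thus ?thesis using cU by (simp add: cls_def card_image)
  qed
  define W where "W = hwt n ` (C - {0})"
  define Fib where "Fib w = {x \<in> C - {0}. hwt n x = w}" for w
  have cls_sub: "cls x \<subseteq> Fib (hwt n x)" if "x \<in> C" "x \<noteq> 0" for x
    using that fvs.subspace_scale[OF sub] fscale_nz hwt_scale by (auto simp: cls_def Fib_def)
  have fW: "finite W" using fc by (simp add: W_def)
  have fF: "finite (Fib w)" for w using fc by (simp add: Fib_def)
  have U: "C - {0} = (\<Union>w\<in>W. Fib w)" by (auto simp: W_def Fib_def)
  have "card (C - {0}) = (\<Sum>w\<in>W. card (Fib w))"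
    unfolding U by (rule card_UN_disjoint[OF fW]) (simp_all add: fF, auto simp: Fib_def)
  moreover have "card (C - {0}) = ?q ^ k - 1" using cC z fc by (simp add: card_Diff_singleton)
  moreover have ge: "card (Fib w) \<ge> m" if "w \<in> W" for w
  proof -
    obtain x where x: "x \<in> C" "x \<noteq> 0" "w = hwt n x" using \<open>w \<in> W\<close> by (auto simp: W_def)
    have "card (cls x) \<le> card (Fib w)" using cls_sub[OF x(1,2)] x(3) fF by (intro card_mono) auto
    thus ?thesis using card_cls[OF x(2)] by simp
  qed
  define w0 where "w0 = hwt n c"
  have w0W: "w0 \<in> W" using c by (auto simp: W_def w0_def)
  have disj: "cls c \<inter> cls d = {}"
  proof (rule ccontr)
    assume "cls c \<inter> cls d \<noteq> {}"
    then obtain a b where ab: "a \<noteq> 0" "b \<noteq> 0" "fscale a c = fscale b d" by (auto simp: cls_def)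
    have "fscale (a/b) c = fscale (1/b) (fscale a c)" by (simp add: fscale_comp)
    also have "\<dots> = fscale (1/b) (fscale b d)" using ab(3) by simp
    also have "\<dots> = d" using ab(2) by (simp add: fscale_comp fscale_one)
    finally have "d = fscale (a / b) c" by simp
    moreover have "a / b \<noteq> 0" using ab by simp
    ultimately show False using nex by blast
  qed
  have "card (cls c \<union> cls d) = 2 * m"
    using card_Un_disjoint[OF _ _ disj] card_cls c d by (simp add: cls_def)
  moreover have "cls c \<union> cls d \<subseteq> Fib w0" using cls_sub[OF c] cls_sub[OF d] w by (auto simp: w0_def)
  ultimately have g0: "card (Fib w0) \<ge> 2 * m" using fF card_mono by metis
  have "(\<Sum>w\<in>W. card (Fib w)) = card (Fib w0) + (\<Sum>w\<in>W - {w0}. card (Fib w))"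
    using w0W fW by (simp add: sum.remove)
  moreover have "(\<Sum>w\<in>W - {w0}. card (Fib w)) \<ge> (\<Sum>w\<in>W - {w0}. m)"
    using ge by (intro sum_mono) auto
  moreover have "(\<Sum>w\<in>W - {w0}. m) = m * (card W - 1)" using w0W fW by simp
  ultimately have "(\<Sum>w\<in>W. card (Fib w)) \<ge> 2 * m + m * (card W - 1)" using g0 by linarith
  moreover have "card W \<ge> 1" using w0W fW by (metis One_nat_def Suc_leI card_gt_0_iff empty_iff)
  ultimately have A: "(\<Sum>w\<in>W. card (Fib w)) \<ge> m + m * card W"
    by (simp add: algebra_simps diff_mult_distrib2)
  have "card W = (?q ^ k - 1) div m" using mws by (simp add: is_MWS_def W_def m_def)
  hence "m * card W = ?q ^ k - 1" using dvd_pow_minus1[of ?q k] by (simp add: m_def)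
  with A \<open>card (C - {0}) = (\<Sum>w\<in>W. card (Fib w))\<close> \<open>card (C - {0}) = ?q ^ k - 1\<close> m1
  show False by linarith
qed


lemma Vvec_distinct_iff:
  fixes \<alpha> :: "'a::{finite,field}"
  assumes pr: "primitive \<alpha>" and a0: "\<alpha> \<noteq> 0"
  shows "distinct (Vvec \<alpha> n c) \<longleftrightarrow> inj (cnt n c)"
proof
  assume d: "distinct (Vvec \<alpha> n c)"
  have inj1: "inj_on (\<lambda>j. cnt n c (\<alpha> ^ j)) {1..<card (UNIV::'a set)}"
    using d by (simp add: Vvec_def distinct_map)
  have ni: "cnt n c 0 \<notin> (\<lambda>j. cnt n c (\<alpha> ^ j)) ` {1..<card (UNIV::'a set)}"
    using d by (auto simp: Vvec_def)
  show "inj (cnt n c)"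
  proof (rule injI, rule ccontr)
    fix x y assume eq: "cnt n c x = cnt n c y" and ne: "x \<noteq> y"
    show False
    proof (cases "x = 0")
      case True
      hence "y \<noteq> 0" using ne by simp
      then obtain j where "j \<in> {1..<card (UNIV::'a set)}" "y = \<alpha> ^ j" using enum_ex[OF pr a0] by blast
      thus False using ni eq True by auto
    next
      case False
      then obtain i where i: "i \<in> {1..<card (UNIV::'a set)}" "x = \<alpha> ^ i" using enum_ex[OF pr a0] by blast
      show False
      proof (cases "y = 0")
        case True
        have "cnt n c 0 \<in> (\<lambda>j. cnt n c (\<alpha> ^ j)) ` {1..<card (UNIV::'a set)}"
          using i eq True by (intro image_eqI[of _ _ i]) auto
        thus False using ni by blast
      next
        case False
        then obtain j where j: "j \<in> {1..<card (UNIV::'a set)}" "y = \<alpha> ^ j" using enum_ex[OF pr a0] by blast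
        have "i = j" using inj_onD[OF inj1 _ i(1) j(1)] eq i j by simp
        thus False using i j ne by simp
      qed
    qed
  qed
next
  assume inj: "inj (cnt n c)"
  have "inj_on (\<lambda>j. cnt n c (\<alpha> ^ j)) {1..<card (UNIV::'a set)}"
    using comp_inj_on[OF enum_inj[OF pr a0] inj_on_subset[OF inj]] by (simp add: o_def)
  moreover have "cnt n c 0 \<notin> (\<lambda>j. cnt n c (\<alpha> ^ j)) ` {1..<card (UNIV::'a set)}"
    using inj a0 by (auto dest: injD)
  ultimately show "distinct (Vvec \<alpha> n c)" by (simp add: Vvec_def distinct_map)
qed

lemma digits:
  fixes f g :: "nat \<Rightarrow> nat"
  assumes "\<forall>j<m. f j < N" "\<forall>j<m. g j < N" "(\<Sum>j<m. N ^ j * f j) = (\<Sum>j<m. N ^ j * g j)" "j < m"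
  shows "f j = g j"
  using assms
proof (induction m arbitrary: f g j)
  case 0 thus ?case by simp
next
  case (Suc m)
  have ef: "(\<Sum>j<Suc m. N ^ j * f j) = f 0 + N * (\<Sum>j<m. N ^ j * f (Suc j))"
    by (subst sum.lessThan_Suc_shift) (simp add: sum_distrib_left mult.assoc)
  have eg: "(\<Sum>j<Suc m. N ^ j * g j) = g 0 + N * (\<Sum>j<m. N ^ j * g (Suc j))"
    by (subst sum.lessThan_Suc_shift) (simp add: sum_distrib_left mult.assoc)
  have f0: "f 0 < N" "g 0 < N" using Suc.prems by auto
  have E: "f 0 + N * (\<Sum>j<m. N ^ j * f (Suc j)) = g 0 + N * (\<Sum>j<m. N ^ j * g (Suc j))"
    using Suc.prems(3) ef eg by simp
  hence "(f 0 + N * (\<Sum>j<m. N ^ j * f (Suc j))) mod N = (g 0 + N * (\<Sum>j<m. N ^ j * g (Suc j))) mod N"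
    by simp
  hence e0: "f 0 = g 0" using f0 by simp
  have "(\<Sum>j<m. N ^ j * f (Suc j)) = (\<Sum>j<m. N ^ j * g (Suc j))"
    using E e0 f0 by simp
  show ?case
  proof (cases j)
    case 0 thus ?thesis using e0 by simp
  next
    case (Suc j')
    have "f (Suc j') = g (Suc j')"
      by (rule Suc.IH[of "\<lambda>j. f (Suc j)" "\<lambda>j. g (Suc j)" j'])
         (use Suc.prems \<open>(\<Sum>j<m. N ^ j * f (Suc j)) = (\<Sum>j<m. N ^ j * g (Suc j))\<close> Suc in auto)
    thus ?thesis using Suc by simp
  qed
qed

lemma sum_shift1: "(\<Sum>j\<in>{1..<Suc m}. g j) = (\<Sum>i<m. (g (Suc i) :: nat))"
  by (induction m) auto

lemma cnt_le: "cnt n c x \<le> n"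
proof -
  have "{l. l < n \<and> c l = x} \<subseteq> {..<n}" by auto
  thus ?thesis unfolding cnt_def using card_mono[of "{..<n}"] by fastforce
qed

lemma hwt_sum:
  fixes c :: "nat \<Rightarrow> 'a::{finite,zero}"
  shows "hwt n c = (\<Sum>x\<in>UNIV - {0}. cnt n c x)"
proof -
  have "{l. l < n \<and> c l \<noteq> 0} = (\<Union>x\<in>UNIV - {0}. {l. l < n \<and> c l = x})" by auto
  hence "hwt n c = card (\<Union>x\<in>UNIV - {0}. {l. l < n \<and> c l = x})" by (simp add: hwt_def)
  also have "\<dots> = (\<Sum>x\<in>UNIV - {0}. card {l. l < n \<and> c l = x})"
    by (rule card_UN_disjoint) auto
  finally show ?thesis by (simp add: cnt_def)
qed

lemma hwt_zero:
  assumes "c \<in> vecs n" "hwt n c = 0" shows "c = 0"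
proof -
  have "{l. l < n \<and> c l \<noteq> 0} = {}" using assms(2) by (simp add: hwt_def)
  thus ?thesis using assms(1) by (auto simp: vecs_def fun_eq_iff) (metis not_le)
qed

lemma hwt0: "hwt n 0 = 0" by (simp add: hwt_def)

lemma shape_set:
  fixes \<alpha> :: "'a::{finite,field}"
  assumes "\<alpha> \<noteq> 0" "p \<in> set (shape \<alpha> r n)"
  shows "fst p \<noteq> 0 \<and> snd p < n"
  using assms by (auto simp: shape_def)


lemma zero_case:
  fixes \<alpha> :: "'a::{finite,field}" and C :: "(nat \<Rightarrow> 'a) set"
  assumes mws: "is_MWS n k C" and C0: "C = {0}"
  shows "is_MWS (R * n) k (rep_code \<alpha> r n C) \<and> propA (R * n) (rep_code \<alpha> r n C) \<and>
         propB \<alpha> (R * n) (rep_code \<alpha> r n C)"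
proof -
  have z: "rep_vec \<alpha> r n 0 = 0" by (simp add: rep_vec_eq fun_eq_iff)
  have rc: "rep_code \<alpha> r n C = {0}" using C0 z by (simp add: rep_code_def)
  have d0: "fvs.dim {0::nat \<Rightarrow> 'a} = 0"
    by (rule fvs.dim_unique[of "{}"]) (auto simp: fvs.span_empty fvs.independent_empty)
  have k0: "k = 0" using mws C0 d0 by (simp add: is_MWS_def is_code_def)
  have "is_MWS (R * n) k {0::nat \<Rightarrow> 'a}"
    using d0 k0 by (simp add: is_MWS_def is_code_def vecs_def)
  moreover have "propA (R * n) {0::nat \<Rightarrow> 'a}" by (auto simp: propA_def intro!: exI[of _ 1])
  moreover have "propB \<alpha> (R * n) {0::nat \<Rightarrow> 'a}" by (simp add: propB_def)
  ultimately show ?thesis using rc by simp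
qed

theorem mainTheorem9:
  fixes \<alpha> :: "'a::{finite,field}" and C :: "(nat \<Rightarrow> 'a) set" and n k :: nat
  assumes "primitive \<alpha>"
    and "is_MWS n k C"
    and "propB \<alpha> n C"
  shows "\<exists>r :: nat \<Rightarrow> nat. (\<exists>j\<in>{1..card (UNIV :: 'a set) - 1}. r j \<noteq> 0) \<and>
           (let R = (\<Sum>j = 1..card (UNIV :: 'a set) - 1. r j) in
              is_MWS (R * n) k (rep_code \<alpha> r n C) \<and>
              propA (R * n) (rep_code \<alpha> r n C) \<and>
              propB \<alpha> (R * n) (rep_code \<alpha> r n C))"
proof -
  note pr = assms(1) and mws = assms(2) and pB = assms(3)
  let ?q = "card (UNIV :: 'a set)"
  define m where "m = ?q - 1"
  have q2: "?q \<ge> 2" using card_ge2[where 'a='a] .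
  have m1: "m \<ge> 1" using q2 by (simp add: m_def)
  have qm: "?q = Suc m" using q2 by (simp add: m_def)
  have ivl: "{1..?q - 1} = {1..<?q}" using q2 by auto
  define N where "N = Suc n"
  define r where "r j = N ^ (j - 1)" for j
  define R where "R = (\<Sum>j\<in>{1..<?q}. r j)"
  have Req: "(\<Sum>j = 1..?q - 1. r j) = R" using ivl by (simp add: R_def)
  have r1: "\<exists>j\<in>{1..?q - 1}. r j \<noteq> 0" using q2 by (intro bexI[of _ 1]) (auto simp: r_def N_def)
  have code: "is_code n k C" using mws by (simp add: is_MWS_def)
  have Cv: "C \<subseteq> vecs n" and sub: "fvs.subspace C" and dC: "fvs.dim C = k"
    and nd: "k \<ge> 2 \<longrightarrow> (\<forall>i<n. \<exists>c\<in>C. c i \<noteq> 0)"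
    using code by (auto simp: is_code_def)
  have z: "0 \<in> C" using fvs.subspace_0[OF sub] .
  show ?thesis
  proof (cases "C = {0}")
    case True
    show ?thesis
      by (rule exI[of _ r], rule conjI[OF r1]) (unfold Let_def, rule zero_case[OF mws True])
  next
    case False
    then obtain c0 where c0: "c0 \<in> C" "c0 \<noteq> 0" using z by blast
    have a0: "\<alpha> \<noteq> 0"
    proof
      assume "\<alpha> = 0"
      have "distinct (Vvec \<alpha> n c0)" using pB c0 by (simp add: propB_def)
      hence "cnt n c0 0 \<notin> (\<lambda>j. cnt n c0 (\<alpha> ^ j)) ` {1..<?q}" by (simp add: Vvec_def)
      moreover have "cnt n c0 0 \<in> (\<lambda>j. cnt n c0 (\<alpha> ^ j)) ` {1..<?q}"
        using q2 \<open>\<alpha> = 0\<close> by (intro image_eqI[of _ _ 1]) auto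
      ultimately show False by blast
    qed
    define \<rho> where "\<rho> = rep_vec \<alpha> r n"
    have Rpos: "R \<ge> 1"
    proof -
      have "r 1 \<le> R" unfolding R_def using q2 by (intro member_le_sum) auto
      thus ?thesis by (simp add: r_def)
    qed
    have hR: "hwt (R * n) (\<rho> c) = R * hwt n c" for c
      unfolding R_def \<rho>_def by (rule hwt_rep[OF a0])
    have cR: "cnt (R * n) (\<rho> c) \<gamma> = (\<Sum>i<m. N ^ i * cnt n c (\<gamma> / \<alpha> ^ Suc i))" for c \<gamma>
    proof -
      have "cnt (R * n) (\<rho> c) \<gamma> = (\<Sum>j\<in>{1..<?q}. r j * cnt n c (\<gamma> / \<alpha> ^ j))"
        unfolding R_def \<rho>_def by (rule cnt_rep[OF a0])
      also have "\<dots> = (\<Sum>i<m. N ^ i * cnt n c (\<gamma> / \<alpha> ^ Suc i))"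
        unfolding qm sum_shift1 by (simp add: r_def)
      finally show ?thesis .
    qed
    have cntN: "cnt n c x < N" for c x using cnt_le[of n c x] by (simp add: N_def)
    have z\<rho>: "\<rho> 0 = 0" by (simp add: \<rho>_def rep_vec_eq fun_eq_iff)
    have lenS: "length (shape \<alpha> r n) = R * n" by (simp add: length_shape R_def)
    have vR: "\<rho> c \<in> vecs (R * n)" for c by (simp add: \<rho>_def rep_vec_eq vecs_def lenS)
    interpret h: module_hom fscale fscale \<rho>
      by unfold_locales (simp_all add: \<rho>_def rep_vec_eq fscale_def fun_eq_iff algebra_simps)
    have ker: "c \<in> C \<Longrightarrow> \<rho> c = 0 \<Longrightarrow> c = 0" for c
    proof -
      assume c: "c \<in> C" "\<rho> c = 0"
      have "R * hwt n c = 0" using hR[of c] c(2) by (simp add: hwt0)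
      hence "hwt n c = 0" using Rpos by simp
      thus "c = 0" using hwt_zero c Cv by blast
    qed
    have injC: "inj_on \<rho> C" using h.inj_on_iff_eq_0[OF sub] ker by blast
    obtain B where B: "B \<subseteq> C" "fvs.independent B" "C \<subseteq> fvs.span B" "card B = fvs.dim C"
      using fvs.basis_exists by blast
    have spB: "fvs.span B = C" using fvs.span_subspace[OF B(1) B(3) sub] .
    have indB: "fvs.independent (\<rho> ` B)"
      using h.independent_injective_image[OF B(2)] injC spB by simp
    have dimR: "fvs.dim (\<rho> ` C) = k"
    proof -
      have "\<rho> ` C = fvs.span (\<rho> ` B)" using h.span_image[of B] spB by simp
      hence "fvs.dim (\<rho> ` C) = card (\<rho> ` B)" using fvs.dim_span_eq_card_independent[OF indB] by simp
      also have "\<dots> = card B" using card_image inj_on_subset[OF injC B(1)] by blast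
      finally show ?thesis using B(4) dC by simp
    qed
    have ndR: "k \<ge> 2 \<longrightarrow> (\<forall>i<R * n. \<exists>c\<in>\<rho> ` C. c i \<noteq> 0)"
    proof (intro impI allI)
      fix i assume k2: "k \<ge> 2" and i: "i < R * n"
      let ?p = "shape \<alpha> r n ! i"
      have "?p \<in> set (shape \<alpha> r n)" using i lenS by simp
      hence p: "fst ?p \<noteq> 0" "snd ?p < n" using shape_set[OF a0] by blast+
      then obtain c where c: "c \<in> C" "c (snd ?p) \<noteq> 0" using nd k2 by blast
      have "\<rho> c i = fst ?p * c (snd ?p)" using i lenS by (simp add: \<rho>_def rep_vec_eq)
      hence "\<rho> c i \<noteq> 0" using p c by simp
      thus "\<exists>c\<in>\<rho> ` C. c i \<noteq> 0" using c by blast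
    qed
    have isc: "is_code (R * n) k (\<rho> ` C)"
      unfolding is_code_def using vR h.subspace_image[OF sub] dimR ndR by blast
    have imgnz: "\<rho> ` C - {0} = \<rho> ` (C - {0})" using ker z\<rho> z by auto
    have "hwt (R * n) ` (\<rho> ` C - {0}) = (\<lambda>w. R * w) ` (hwt n ` (C - {0}))"
      unfolding imgnz image_image hR ..
    hence "card (hwt (R * n) ` (\<rho> ` C - {0})) = card (hwt n ` (C - {0}))"
      using Rpos by (simp add: card_image inj_on_def)
    hence mwsR: "is_MWS (R * n) k (\<rho> ` C)" using isc mws by (simp add: is_MWS_def)
    have pBR: "propB \<alpha> (R * n) (\<rho> ` C)"
      unfolding propB_def
    proof
      fix a assume "a \<in> \<rho> ` C - {0}"
      then obtain c where c: "c \<in> C" "c \<noteq> 0" "a = \<rho> c" using z\<rho> by (metis DiffE image_iff singletonI)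
      have "inj (cnt n c)" using pB c Vvec_distinct_iff[OF pr a0] by (simp add: propB_def)
      have "inj (cnt (R * n) (\<rho> c))"
      proof (rule injI)
        fix x y assume "cnt (R * n) (\<rho> c) x = cnt (R * n) (\<rho> c) y"
        hence "(\<Sum>i<m. N ^ i * cnt n c (x / \<alpha> ^ Suc i)) = (\<Sum>i<m. N ^ i * cnt n c (y / \<alpha> ^ Suc i))"
          by (simp add: cR)
        hence "cnt n c (x / \<alpha> ^ Suc 0) = cnt n c (y / \<alpha> ^ Suc 0)"
          using digits[of m "\<lambda>i. cnt n c (x / \<alpha> ^ Suc i)" N "\<lambda>i. cnt n c (y / \<alpha> ^ Suc i)" 0] m1
          by (simp add: cntN)
        hence "x / \<alpha> = y / \<alpha>" using \<open>inj (cnt n c)\<close> by (simp add: inj_eq)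
        thus "x = y" using a0 by simp
      qed
      thus "distinct (Vvec \<alpha> (R * n) a)" using c Vvec_distinct_iff[OF pr a0] by simp
    qed
    have pAR: "propA (R * n) (\<rho> ` C)"
      unfolding propA_def
    proof (intro exI[of _ 1] conjI ballI impI)
      show "(1::'a) \<noteq> 0" by simp
      fix a b assume "a \<in> \<rho> ` C" "b \<in> \<rho> ` C" and eq: "cnt (R * n) a 1 = cnt (R * n) b 1"
      then obtain c d where cd: "c \<in> C" "d \<in> C" "a = \<rho> c" "b = \<rho> d" by blast
      have "(\<Sum>i<m. N ^ i * cnt n c (1 / \<alpha> ^ Suc i)) = (\<Sum>i<m. N ^ i * cnt n d (1 / \<alpha> ^ Suc i))"
        using eq cd by (simp add: cR)
      hence dig: "cnt n c (1 / \<alpha> ^ Suc i) = cnt n d (1 / \<alpha> ^ Suc i)" if "i < m" for i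
        using digits[of m "\<lambda>i. cnt n c (1 / \<alpha> ^ Suc i)" N "\<lambda>i. cnt n d (1 / \<alpha> ^ Suc i)" i] that
        by (simp add: cntN)
      have allx: "cnt n c x = cnt n d x" if "x \<noteq> 0" for x
      proof -
        have "1 / x \<noteq> 0" using that by simp
        then obtain j where j: "j \<in> {1..<?q}" "1 / x = \<alpha> ^ j" using enum_ex[OF pr a0] by blast
        have "x = 1 / (1 / x)" by simp
        hence "x = 1 / \<alpha> ^ j" using j(2) by simp
        moreover have "Suc (j - 1) = j" using j(1) by simp
        ultimately have x: "x = 1 / \<alpha> ^ Suc (j - 1)" by simp
        have "j - 1 < m" using j by (auto simp: m_def)
        thus ?thesis using dig x by simp
      qed
      have hw: "hwt n c = hwt n d" unfolding hwt_sum using allx by (intro sum.cong) auto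
      have "c = d"
      proof (cases "c = 0 \<or> d = 0")
        case True
        hence "hwt n c = 0 \<or> hwt n d = 0" using hwt0 by auto
        hence "hwt n c = 0 \<and> hwt n d = 0" using hw by simp
        thus "c = d" using hwt_zero Cv cd by blast
      next
        case False
        then obtain s where s: "s \<noteq> 0" "d = fscale s c"
          using class_lemma[OF mws cd(1) _ cd(2) _ hw] by blast
        have "inj (cnt n c)" using pB cd False Vvec_distinct_iff[OF pr a0] by (simp add: propB_def)
        have "cnt n c 1 = cnt n d 1" using allx by simp
        also have "\<dots> = cnt n c (1 / s)" using s cnt_scale by simp
        finally have "1 = 1 / s" using \<open>inj (cnt n c)\<close> by (simp add: inj_eq)
        hence "s = 1" by (simp add: field_simps)
        thus "c = d" using s by (simp add: fscale_one)
      qed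
      thus "a = b" using cd by simp
    qed
    have "rep_code \<alpha> r n C = \<rho> ` C" by (simp add: rep_code_def \<rho>_def)
    thus ?thesis using r1 mwsR pBR pAR Req by (intro exI[of _ r]) (simp add: Let_def)
  qed
qed

end
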